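(* Let $D=(V,A)$ be a strongly connected oriented graph. The following two conditions are equivalent: (1) for every vertex $x$, the out-neighbourhood $x^+$ induces a tournament and the in-neighbourhood $x^-$ induces an acyclic digraph; (2) there exists a cyclic order of $V$ such that for every arc $xy\in A$ and every vertex $z\in\,]x,y[$, we have $zy\in A$.
   Context: All digraphs are finite, with no loops and no parallel arcs. A digon is a pair of arcs $xy,yx$; an oriented graph is a digraph with no digon. For a vertex $x$, $x^+=\{y: xy\in A\}$ and $x^-=\{y: yx\in A\}$. A digraph is strongly connected (strong) if there is a directed path between every ordered pair of vertices. A tournament is an oriented graph in which any two distinct vertices are joined by an arc. A linear order $(v_1,\dots,v_n)$ of $V$ is equivalent to each of its cyclic shifts $(v_k,\dots,v_n,v_1,\dots,v_{k-1})$; an equivalence class is a cyclic order. For vertices $v_i,v_j$, the cyclic interval $[v_i,v_j]$ is $\{v_k: i\le k\le j\}$ if $i<j$ and $\{v_k: k\notin\,]j,i[\}$ if $i\ge j$ (this depends only on the cyclic order), and $]v_i,v_j[=[v_i,v_j]\setminus\{v_i,v_j\}$. *)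

theory Defs
  imports Main
begin

definition digraph :: "'a set \<Rightarrow> ('a \<times> 'a) set \<Rightarrow> bool" where
  "digraph V A \<longleftrightarrow> finite V \<and> A \<subseteq> V \<times> V \<and> (\<forall>x. (x, x) \<notin> A)"

definition oriented_graph :: "'a set \<Rightarrow> ('a \<times> 'a) set \<Rightarrow> bool" where
  "oriented_graph V A \<longleftrightarrow> digraph V A \<and> (\<forall>x y. (x, y) \<in> A \<longrightarrow> (y, x) \<notin> A)"

definition strongly_connected :: "'a set \<Rightarrow> ('a \<times> 'a) set \<Rightarrow> bool" where
  "strongly_connected V A \<longleftrightarrow> (\<forall>u\<in>V. \<forall>v\<in>V. (u, v) \<in> A\<^sup>*)"

definition out_nbhd :: "('a \<times> 'a) set \<Rightarrow> 'a \<Rightarrow> 'a set" where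
  "out_nbhd A x = {y. (x, y) \<in> A}"

definition in_nbhd :: "('a \<times> 'a) set \<Rightarrow> 'a \<Rightarrow> 'a set" where
  "in_nbhd A x = {y. (y, x) \<in> A}"

definition induced_arcs :: "('a \<times> 'a) set \<Rightarrow> 'a set \<Rightarrow> ('a \<times> 'a) set" where
  "induced_arcs A S = A \<inter> (S \<times> S)"

definition induces_tournament :: "('a \<times> 'a) set \<Rightarrow> 'a set \<Rightarrow> bool" where
  "induces_tournament A S \<longleftrightarrow>
     (\<forall>x\<in>S. \<forall>y\<in>S. (x, y) \<in> induced_arcs A S \<longrightarrow> (y, x) \<notin> induced_arcs A S) \<and>
     (\<forall>x\<in>S. \<forall>y\<in>S. x \<noteq> y \<longrightarrow> (x, y) \<in> induced_arcs A S \<or> (y, x) \<in> induced_arcs A S)"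

definition induces_acyclic :: "('a \<times> 'a) set \<Rightarrow> 'a set \<Rightarrow> bool" where
  "induces_acyclic A S \<longleftrightarrow> acyclic (induced_arcs A S)"

text \<open>A linear order of V is a distinct list enumerating V; the cyclic order is its
  class under cyclic shifts. This only depends on the cyclic order.\<close>
definition linear_order_of :: "'a set \<Rightarrow> 'a list \<Rightarrow> bool" where
  "linear_order_of V vs \<longleftrightarrow> distinct vs \<and> set vs = V"

definition open_cyc_interval :: "'a list \<Rightarrow> 'a \<Rightarrow> 'a \<Rightarrow> 'a set" where
  "open_cyc_interval vs x y =
     {vs ! k | k. \<exists>i j. i < length vs \<and> j < length vs \<and> vs ! i = x \<and> vs ! j = y \<and>
          k < length vs \<and> (if i < j then i < k \<and> k < j else k < j \<or> i < k)} - {x, y}"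

end

theory Submission
  imports Defs
begin


definition idx :: "'a list \<Rightarrow> 'a \<Rightarrow> nat" where
  "idx vs z = (THE i. i < length vs \<and> vs ! i = z)"

lemma idx_nth: "distinct vs \<Longrightarrow> i < length vs \<Longrightarrow> idx vs (vs ! i) = i"
  unfolding idx_def by (rule the_equality) (auto simp: nth_eq_iff_index_eq)

lemma idx_in: "distinct vs \<Longrightarrow> z \<in> set vs \<Longrightarrow> idx vs z < length vs \<and> vs ! idx vs z = z"
  by (metis idx_nth in_set_conv_nth)

definition rk :: "'a list \<Rightarrow> 'a \<Rightarrow> 'a \<Rightarrow> nat" where
  "rk vs x z = (if idx vs x \<le> idx vs z then idx vs z - idx vs x else length vs + idx vs z - idx vs x)"

lemma oci:
  assumes d: "distinct vs" and x: "x \<in> set vs" and y: "y \<in> set vs" and xy: "x \<noteq> y"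
  shows "z \<in> open_cyc_interval vs x y \<longleftrightarrow> z \<in> set vs \<and> 0 < rk vs x z \<and> rk vs x z < rk vs x y"
proof -
  obtain i where i: "i < length vs" "vs ! i = x" using x by (metis in_set_conv_nth)
  obtain j where j: "j < length vs" "vs ! j = y" using y by (metis in_set_conv_nth)
  have ix: "idx vs x = i" using idx_nth[OF d i(1)] i by simp
  have jy: "idx vs y = j" using idx_nth[OF d j(1)] j by simp
  have ij: "i \<noteq> j" using i j xy by auto
  show ?thesis
  proof
    assume "z \<in> open_cyc_interval vs x y"
    then obtain k i' j' where k: "z = vs ! k" "i' < length vs" "j' < length vs" "vs ! i' = x" "vs ! j' = y"
      "k < length vs" "(if i' < j' then i' < k \<and> k < j' else k < j' \<or> i' < k)" "z \<noteq> x" "z \<noteq> y"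
      unfolding open_cyc_interval_def by blast
    have "i' = i" using k(2,4) i d nth_eq_iff_index_eq by metis
    moreover have "j' = j" using k(3,5) j d nth_eq_iff_index_eq by metis
    moreover have "idx vs z = k" using idx_nth[OF d k(6)] k by simp
    moreover have "k \<noteq> i" "k \<noteq> j" using k i j by auto
    ultimately show "z \<in> set vs \<and> 0 < rk vs x z \<and> rk vs x z < rk vs x y"
      using k i j ix jy ij unfolding rk_def by (auto split: if_splits)
  next
    assume z: "z \<in> set vs \<and> 0 < rk vs x z \<and> rk vs x z < rk vs x y"
    obtain k where k: "k < length vs" "vs ! k = z" using z by (metis in_set_conv_nth)
    have kz: "idx vs z = k" using idx_nth[OF d k(1)] k by simp
    have c: "(if i < j then i < k \<and> k < j else k < j \<or> i < k)" "k \<noteq> i" "k \<noteq> j"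
      using z kz ix jy i j ij unfolding rk_def by (auto split: if_splits)
    have "z \<noteq> x" "z \<noteq> y" using c k i j d by (auto simp: nth_eq_iff_index_eq)
    then show "z \<in> open_cyc_interval vs x y"
      unfolding open_cyc_interval_def using i j k c by blast
  qed
qed

lemma two_one:
  assumes og: "oriented_graph V A" and lo: "linear_order_of V vs"
    and P: "\<forall>x y z. (x, y) \<in> A \<longrightarrow> z \<in> open_cyc_interval vs x y \<longrightarrow> (z, y) \<in> A"
    and xV: "x \<in> V"
  shows "induces_tournament A (out_nbhd A x) \<and> induces_acyclic A (in_nbhd A x)"
proof -
  have d: "distinct vs" and sV: "set vs = V" using lo unfolding linear_order_of_def by auto
  have AV: "A \<subseteq> V \<times> V" and nl: "\<And>x. (x,x) \<notin> A" and asym: "\<And>x y. (x,y) \<in> A \<Longrightarrow> (y,x) \<notin> A"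
    using og unfolding oriented_graph_def digraph_def by auto
  have rkinj: "rk vs x a \<noteq> rk vs x b" if "a \<in> set vs" "b \<in> set vs" "a \<noteq> b" for a b
  proof -
    have "idx vs a \<noteq> idx vs b" using idx_in[OF d that(1)] idx_in[OF d that(2)] that(3) by metis
    moreover have "idx vs x < length vs" using idx_in[OF d] xV sV by auto
    ultimately show ?thesis using idx_in[OF d that(1)] idx_in[OF d that(2)] unfolding rk_def by (auto split: if_splits)
  qed
  have T: "induces_tournament A (out_nbhd A x)"
    unfolding induces_tournament_def induced_arcs_def
  proof (intro conjI ballI impI)
    fix a b assume "a \<in> out_nbhd A x" "b \<in> out_nbhd A x" "(a, b) \<in> A \<inter> out_nbhd A x \<times> out_nbhd A x"
    thus "(b, a) \<notin> A \<inter> out_nbhd A x \<times> out_nbhd A x" using asym by auto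
  next
    fix a b assume a: "a \<in> out_nbhd A x" and b: "b \<in> out_nbhd A x" and ab: "a \<noteq> b"
    have xa: "(x,a) \<in> A" and xb: "(x,b) \<in> A" using a b unfolding out_nbhd_def by auto
    have inV: "x \<in> set vs" "a \<in> set vs" "b \<in> set vs" using xa xb AV sV by auto
    have "x \<noteq> a" "x \<noteq> b" using xa xb nl by auto
    have "(a,b) \<in> A \<or> (b,a) \<in> A"
    proof (cases "rk vs x a < rk vs x b")
      case True
      have "0 < rk vs x a" using rkinj[OF inV(1,2) \<open>x \<noteq> a\<close>] unfolding rk_def by (auto split: if_splits)
      hence "a \<in> open_cyc_interval vs x b" using oci[OF d inV(1,3) \<open>x \<noteq> b\<close>] True inV by auto
      thus ?thesis using P xb by blast
    next
      case False
      hence lt: "rk vs x b < rk vs x a" using rkinj[OF inV(2,3) ab] by auto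
      have "0 < rk vs x b" using rkinj[OF inV(1,3) \<open>x \<noteq> b\<close>] unfolding rk_def by (auto split: if_splits)
      hence "b \<in> open_cyc_interval vs x a" using oci[OF d inV(1,2) \<open>x \<noteq> a\<close>] lt inV by auto
      thus ?thesis using P xa by blast
    qed
    thus "(a, b) \<in> A \<inter> out_nbhd A x \<times> out_nbhd A x \<or> (b, a) \<in> A \<inter> out_nbhd A x \<times> out_nbhd A x"
      using a b by auto
  qed
  have sub: "induced_arcs A (in_nbhd A x) \<subseteq> inv_image less_than (rk vs x)"
  proof
    fix p assume "p \<in> induced_arcs A (in_nbhd A x)"
    then obtain a b where p: "p = (a,b)" "(a,b) \<in> A" "(a,x) \<in> A" "(b,x) \<in> A"
      unfolding induced_arcs_def in_nbhd_def by auto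
    have inV: "x \<in> set vs" "a \<in> set vs" "b \<in> set vs" using p AV sV by auto
    have ne: "a \<noteq> x" "b \<noteq> x" "a \<noteq> b" using p nl by auto
    have "rk vs x a < rk vs x b"
    proof (rule ccontr)
      assume "\<not> ?thesis"
      hence lt: "rk vs x b < rk vs x a" using rkinj[OF inV(2,3) ne(3)] by auto
      have ia: "idx vs a < length vs" "idx vs b < length vs" "idx vs x < length vs"
        using idx_in[OF d inV(2)] idx_in[OF d inV(3)] idx_in[OF d inV(1)] by auto
      have n1: "idx vs a \<noteq> idx vs x" "idx vs b \<noteq> idx vs x" "idx vs a \<noteq> idx vs b"
        using idx_in[OF d inV(2)] idx_in[OF d inV(3)] idx_in[OF d inV(1)] ne by metis+
      have "0 < rk vs a x \<and> rk vs a x < rk vs a b" using lt ia n1 unfolding rk_def by (auto split: if_splits)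
      hence "x \<in> open_cyc_interval vs a b" using oci[OF d inV(2,3) ne(3)] inV by auto
      hence "(x,b) \<in> A" using P p by blast
      thus False using p asym by blast
    qed
    thus "p \<in> inv_image less_than (rk vs x)" using p by auto
  qed
  have "acyclic (inv_image less_than (rk vs x))" by (rule wf_acyclic) (rule wf_inv_image, rule wf_less_than)
  hence "induces_acyclic A (in_nbhd A x)" unfolding induces_acyclic_def using sub acyclic_subset by blast
  with T show ?thesis by simp
qed



definition good :: "('a \<times> 'a) set \<Rightarrow> 'a set \<Rightarrow> ('a \<Rightarrow> 'a) \<Rightarrow> bool" where
  "good A S s \<longleftrightarrow> finite S \<and> S \<noteq> {} \<and> s ` S \<subseteq> S \<and> inj_on s S \<and> (\<forall>x\<in>S. (x, s x) \<in> A) \<and>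
     (\<forall>x\<in>S. \<forall>v\<in>S. (x,v) \<in> A \<longrightarrow> v \<noteq> s x \<longrightarrow> (s x, v) \<in> A) \<and> (\<forall>a\<in>S. \<forall>b\<in>S. \<exists>k. (s^^k) a = b)"

definition Gr :: "('a \<Rightarrow> 'a) \<Rightarrow> 'a set \<Rightarrow> ('a \<times> 'a) set" where
  "Gr s X = {(p, s p) | p. p \<in> X \<and> s p \<in> X}"

lemma good_iter: "good A S s \<Longrightarrow> a \<in> S \<Longrightarrow> (s^^k) a \<in> S"
proof (induction k)
  case 0 then show ?case by simp
next
  case (Suc k)
  have "s ` S \<subseteq> S" using Suc.prems unfolding good_def by blast
  thus ?case using Suc by auto
qed

lemma walk:
  assumes g: "good A S s" and X: "X \<subseteq> S" and a: "a \<in> X" and t: "t \<in> S"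
    and cl: "\<And>z. z \<in> X \<Longrightarrow> z \<noteq> t \<Longrightarrow> s z \<in> X"
  shows "t \<in> X \<and> (a, t) \<in> (Gr s X)\<^sup>*"
proof -
  have "\<exists>k. (s^^k) a = t" using g a X t unfolding good_def by blast
  hence "\<exists>k. (s^^k) a = t \<and> (\<forall>m<k. \<not> (s^^m) a = t)" by (rule exists_least_iff[THEN iffD1])
  then obtain k where k: "(s^^k) a = t" "\<forall>m<k. (s^^m) a \<noteq> t" by blast
  have "j \<le> k \<Longrightarrow> (s^^j) a \<in> X \<and> (a, (s^^j) a) \<in> (Gr s X)\<^sup>*" for j
  proof (induction j)
    case 0 then show ?case using a by simp
  next
    case (Suc j)
    then have h: "(s^^j) a \<in> X" "(a, (s^^j) a) \<in> (Gr s X)\<^sup>*" by auto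
    have "j < k" using Suc.prems by simp
    hence "(s^^j) a \<noteq> t" using k(2) by blast
    hence "s ((s^^j) a) \<in> X" using cl h by blast
    hence "((s^^j) a, (s^^Suc j) a) \<in> Gr s X" using h unfolding Gr_def by auto
    hence "(a, (s^^Suc j) a) \<in> (Gr s X)\<^sup>*" using h(2) by (rule rtrancl_into_rtrancl[rotated])
    thus ?case using \<open>s ((s^^j) a) \<in> X\<close> by simp
  qed
  from this[of k] k show ?thesis by simp
qed

lemma Gr_sub: "good A S s \<Longrightarrow> X \<subseteq> S \<Longrightarrow> X \<subseteq> Y \<Longrightarrow> Gr s X \<subseteq> induced_arcs A Y"
  unfolding Gr_def induced_arcs_def good_def by auto

lemma good_pred:
  assumes g: "good A S s" and b: "b \<in> S" shows "\<exists>p\<in>S. s p = b"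
proof -
  have sb: "s b \<in> S" using g b unfolding good_def by auto
  then obtain k where "(s^^k) (s b) = b" using g b unfolding good_def by blast
  hence "s ((s^^k) b) = b" by (simp add: funpow_swap1)
  thus ?thesis using good_iter[OF g b] by blast
qed

lemma inward:
  assumes g: "good A S s" and a: "a \<in> S" and b: "b \<in> S" and ab: "(a,b) \<in> A"
  shows "\<exists>p\<in>S. s p = b \<and> (a, p) \<in> (Gr s {z\<in>S. (z,b) \<in> A})\<^sup>* \<and> (p,b) \<in> A"
proof -
  obtain p where p: "p \<in> S" "s p = b" using good_pred[OF g b] by blast
  let ?X = "{z\<in>S. (z,b) \<in> A}"
  have "p \<in> ?X \<and> (a, p) \<in> (Gr s ?X)\<^sup>*"
  proof (rule walk[OF g])
    show "?X \<subseteq> S" by auto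
    show "a \<in> ?X" using a ab by auto
    show "p \<in> S" by fact
    fix z assume z: "z \<in> ?X" "z \<noteq> p"
    have inj: "inj_on s S" and src: "\<forall>x\<in>S. \<forall>v\<in>S. (x,v) \<in> A \<longrightarrow> v \<noteq> s x \<longrightarrow> (s x, v) \<in> A"
      and im: "s ` S \<subseteq> S" using g unfolding good_def by auto
    have zS: "z \<in> S" "(z,b) \<in> A" using z by auto
    have "s z \<noteq> b" using z(2) p inj zS(1) by (metis inj_on_contraD)
    thus "s z \<in> ?X" using src zS b im by blast
  qed
  thus ?thesis using p by auto
qed

lemma fwd:
  assumes g: "good A S s" and a: "a \<in> S" and b: "b \<in> S" and ab: "(a,b) \<in> A"
  shows "(\<forall>m'. 0 < m' \<and> m' \<le> m \<longrightarrow> (s^^m') a \<noteq> b) \<Longrightarrow> ((s^^m) a, b) \<in> A"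
proof (induction m)
  case 0 then show ?case using ab by simp
next
  case (Suc m)
  hence h: "((s^^m) a, b) \<in> A" by auto
  have "(s^^Suc m) a \<noteq> b" using Suc.prems by blast
  have src: "\<forall>x\<in>S. \<forall>v\<in>S. (x,v) \<in> A \<longrightarrow> v \<noteq> s x \<longrightarrow> (s x, v) \<in> A"
    using g unfolding good_def by blast
  have "(s^^Suc m) a = s ((s^^m) a)" by simp
  thus ?case using h src good_iter[OF g a, of m] b \<open>(s^^Suc m) a \<noteq> b\<close> by metis
qed



lemma cyc: "acyclic R \<Longrightarrow> (a,b) \<in> R \<Longrightarrow> (b,a) \<in> R\<^sup>* \<Longrightarrow> False"
  unfolding acyclic_def by (meson rtrancl_into_trancl2)

lemma cyc3: "acyclic R \<Longrightarrow> R' \<subseteq> R \<Longrightarrow> (y,v) \<in> R \<Longrightarrow> (v,u) \<in> R'\<^sup>* \<Longrightarrow> (u,y) \<in> R \<Longrightarrow> False"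
proof -
  assume a: "acyclic R" "R' \<subseteq> R" "(y,v) \<in> R" "(v,u) \<in> R'\<^sup>*" "(u,y) \<in> R"
  have "(v,u) \<in> R\<^sup>*" using a(2,4) rtrancl_mono by blast
  hence "(v,y) \<in> R\<^sup>*" using a(5) by (rule rtrancl_into_rtrancl)
  thus False using cyc[OF a(1) a(3)] by blast
qed

lemma insert_good:
  assumes g: "good A S s"
    and tour: "\<And>x a b. (x,a) \<in> A \<Longrightarrow> (x,b) \<in> A \<Longrightarrow> a \<noteq> b \<Longrightarrow> (a,b) \<in> A \<or> (b,a) \<in> A"
    and acyc: "\<And>x. acyclic (induced_arcs A (in_nbhd A x))"
    and nl: "\<And>x. (x,x) \<notin> A"
    and yS: "y \<notin> S" and u0: "u0 \<in> S" "(u0,y) \<in> A"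
  shows "\<exists>s'. good A (insert y S) s'"
proof -
  have fin: "finite S" and im: "\<And>x. x \<in> S \<Longrightarrow> s x \<in> S" and inj: "inj_on s S"
    and arc: "\<And>x. x \<in> S \<Longrightarrow> (x, s x) \<in> A"
    and src: "\<And>x v. x \<in> S \<Longrightarrow> v \<in> S \<Longrightarrow> (x,v) \<in> A \<Longrightarrow> v \<noteq> s x \<Longrightarrow> (s x, v) \<in> A"
    and sc: "\<And>a b. a \<in> S \<Longrightarrow> b \<in> S \<Longrightarrow> \<exists>k. (s^^k) a = b"
    using g unfolding good_def by blast+
  define I where "I = {z\<in>S. (z,y) \<in> A}"
  define Ou where "Ou = {z\<in>S. (y,z) \<in> A}"
  have injD: "\<And>a b. a \<in> S \<Longrightarrow> b \<in> S \<Longrightarrow> s a = s b \<Longrightarrow> a = b" using inj by (meson inj_onD)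
  have step: "s z \<in> I \<or> s z \<in> Ou" if z: "z \<in> I" for z
  proof -
    have "z \<in> S" "(z,y) \<in> A" using z unfolding I_def by auto
    moreover have "s z \<noteq> y" using im[OF \<open>z \<in> S\<close>] yS by auto
    ultimately have "(s z, y) \<in> A \<or> (y, s z) \<in> A" using tour arc by blast
    thus ?thesis using im[OF \<open>z \<in> S\<close>] unfolding I_def Ou_def by auto
  qed
  \<comment> \<open>cycle through y in the in-neighbourhood of w\<close>
  have nocyc: False if v: "v \<in> S" "(y,v) \<in> A" and w: "w \<in> S" "(y,w) \<in> A" "(v,w) \<in> A"
    and p: "p \<in> S" "s p = w" "(v, p) \<in> (Gr s {z\<in>S. (z,w) \<in> A})\<^sup>*" and py: "(p,y) \<in> A" for v w p
  proof -
    let ?R = "induced_arcs A (in_nbhd A w)"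
    have pw: "(p,w) \<in> A" using arc[OF p(1)] p(2) by simp
    have sub: "Gr s {z\<in>S. (z,w) \<in> A} \<subseteq> ?R" by (rule Gr_sub[OF g]) (auto simp: in_nbhd_def)
    have "(y,v) \<in> ?R" "(p,y) \<in> ?R" using v w py pw unfolding induced_arcs_def in_nbhd_def by auto
    thus False using cyc3[OF acyc sub _ p(3)] by blast
  qed
  have noO: False if u: "u1 \<in> I" "u2 \<in> I" "s u1 \<in> Ou" "s u2 \<in> Ou" "(s u1, s u2) \<in> A" for u1 u2
  proof -
    have S: "u1 \<in> S" "u2 \<in> S" "s u1 \<in> S" "s u2 \<in> S" using u unfolding I_def Ou_def by auto
    obtain p where p: "p \<in> S" "s p = s u2" "(s u1, p) \<in> (Gr s {z\<in>S. (z,s u2) \<in> A})\<^sup>*"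
      using inward[OF g S(3,4) u(5)] by blast
    have "p = u2" using injD[OF p(1) S(2) p(2)] .
    show False
      by (rule nocyc[of "s u1" "s u2" p]) (use u S p \<open>p = u2\<close> in \<open>auto simp: I_def Ou_def\<close>)
  qed
  have uniq: "u1 = u2" if u: "u1 \<in> I" "u2 \<in> I" "s u1 \<in> Ou" "s u2 \<in> Ou" for u1 u2
  proof (rule ccontr)
    assume ne: "u1 \<noteq> u2"
    have S: "u1 \<in> S" "u2 \<in> S" using u unfolding I_def by auto
    have "s u1 \<noteq> s u2" using ne injD[OF S] by blast
    moreover have "(y, s u1) \<in> A" "(y, s u2) \<in> A" using u unfolding Ou_def by auto
    ultimately have "(s u1, s u2) \<in> A \<or> (s u2, s u1) \<in> A" using tour by blast
    thus False using noO u by blast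
  qed
  have u0I: "u0 \<in> I" using u0 unfolding I_def by auto
  have "\<exists>u\<in>I. s u \<in> Ou"
  proof (rule ccontr)
    assume "\<not> ?thesis"
    hence cl: "\<And>z. z \<in> I \<Longrightarrow> s z \<in> I" using step by blast
    have "u0 \<in> I \<and> (s u0, u0) \<in> (Gr s I)\<^sup>*"
      by (rule walk[OF g]) (use cl u0I u0 in \<open>auto simp: I_def\<close>)
    moreover have "(u0, s u0) \<in> Gr s I" using cl[OF u0I] u0I unfolding Gr_def by auto
    moreover have "Gr s I \<subseteq> induced_arcs A (in_nbhd A y)" by (rule Gr_sub[OF g]) (auto simp: I_def in_nbhd_def)
    ultimately show False using cyc[OF acyc] rtrancl_mono by blast
  qed
  then obtain u where uI: "u \<in> I" and wO: "s u \<in> Ou" by blast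
  have uS: "u \<in> S" and uy: "(u,y) \<in> A" using uI unfolding I_def by auto
  have wS: "s u \<in> S" and yw: "(y, s u) \<in> A" using wO unfolding Ou_def by auto
  have uny: "u \<noteq> y" using uS yS by auto
  have closeI: "s z \<in> I" if "z \<in> I" "z \<noteq> u" for z
    using step[OF that(1)] uniq[OF that(1) uI _ wO] that(2) by blast
  define s' where "s' = s(u := y, y := s u)"
  have s'y: "s' y = s u" and s'u: "s' u = y" and s'x: "\<And>x. x \<noteq> u \<Longrightarrow> x \<noteq> y \<Longrightarrow> s' x = s x"
    unfolding s'_def using uny by auto
  let ?S = "insert y S"
  have G1a: "finite ?S" using fin by auto
  have G1b: "?S \<noteq> {}" by auto
  have G2: "s' ` ?S \<subseteq> ?S"
  proof
    fix z assume "z \<in> s' ` ?S"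
    then obtain x where x: "x \<in> ?S" "z = s' x" by blast
    show "z \<in> ?S"
      using x s'y s'u s'x[of x] wS im[of x] by (cases "x = y"; cases "x = u") auto
  qed
  have G3: "inj_on s' ?S"
  proof (rule inj_onI)
    fix a b assume a: "a \<in> ?S" and b: "b \<in> ?S" and e: "s' a = s' b"
    have vS: "s' x \<in> S" if "x \<in> ?S" "x \<noteq> u" for x
      using that s'y s'x[of x] wS im[of x] by (cases "x = y") auto
    show "a = b"
    proof (cases "a = u \<or> b = u")
      case True
      thus ?thesis using vS a b e s'u yS by metis
    next
      case False
      hence nu: "a \<noteq> u" "b \<noteq> u" by auto
      show ?thesis
      proof (cases "a = y \<or> b = y")
        case True
        thus ?thesis using a b e s'y s'x nu injD uS by (metis insertE)
      next
        case False
        thus ?thesis using a b e s'x nu injD by auto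
      qed
    qed
  qed
  have G4: "\<forall>x\<in>?S. (x, s' x) \<in> A"
  proof
    fix x assume x: "x \<in> ?S"
    show "(x, s' x) \<in> A"
    proof (cases "x = y")
      case True thus ?thesis using s'y yw by simp
    next
      case False
      thus ?thesis using x s'u uy s'x[of x] arc[of x] by (cases "x = u") auto
    qed
  qed
  have G5: "\<forall>x\<in>?S. \<forall>v\<in>?S. (x,v) \<in> A \<longrightarrow> v \<noteq> s' x \<longrightarrow> (s' x, v) \<in> A"
  proof (intro ballI impI)
    fix x v assume x: "x \<in> ?S" and v: "v \<in> ?S" and xv: "(x,v) \<in> A" and vn: "v \<noteq> s' x"
    show "(s' x, v) \<in> A"
    proof (cases "x = y")
      case True
      hence vS: "v \<in> S" and yv: "(y,v) \<in> A" and vw: "v \<noteq> s u" using v xv nl vn s'y by auto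
      have "(s u, v) \<in> A \<or> (v, s u) \<in> A" using tour[OF yw yv] vw by auto
      moreover have False if vsu: "(v, s u) \<in> A"
      proof -
        obtain p where p: "p \<in> S" "s p = s u" "(v, p) \<in> (Gr s {z\<in>S. (z,s u) \<in> A})\<^sup>*"
          using inward[OF g vS wS vsu] by blast
        have "p = u" using injD[OF p(1) uS p(2)] .
        show False by (rule nocyc[OF vS yv wS yw vsu p]) (use \<open>p = u\<close> uy in simp)
      qed
      ultimately show ?thesis using True s'y by auto
    next
      case False
      note xny = False
      show ?thesis
      proof (cases "x = u")
        case True
        hence vS: "v \<in> S" and uv: "(u,v) \<in> A" using v xv vn s'u by auto
        show ?thesis
        proof (cases "v = s u")
          case True thus ?thesis using yw s'u \<open>x = u\<close> by simp
        next
          case False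
          have "v \<noteq> y" using vS yS by auto
          hence "(y,v) \<in> A \<or> (v,y) \<in> A" using tour[OF uy uv] by auto
          moreover have False if vy: "(v,y) \<in> A"
          proof -
            have vI: "v \<in> I" using vS vy unfolding I_def by auto
            have "u \<in> I \<and> (v, u) \<in> (Gr s I)\<^sup>*"
              by (rule walk[OF g _ vI uS]) (use closeI in \<open>auto simp: I_def\<close>)
            moreover have "Gr s I \<subseteq> induced_arcs A (in_nbhd A y)" by (rule Gr_sub[OF g]) (auto simp: I_def in_nbhd_def)
            moreover have "(u,v) \<in> induced_arcs A (in_nbhd A y)"
              using uv uy vy unfolding induced_arcs_def in_nbhd_def by auto
            ultimately show False using cyc[OF acyc] rtrancl_mono by blast
          qed
          ultimately show ?thesis using \<open>x = u\<close> s'u by auto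
        qed
      next
        case False
        have xS: "x \<in> S" using x xny by auto
        have e: "s' x = s x" using s'x False xny .
        show ?thesis
        proof (cases "v = y")
          case True
          hence "x \<in> I" using xS xv unfolding I_def by auto
          hence "s x \<in> I" using closeI False by blast
          thus ?thesis using True e unfolding I_def by auto
        next
          case False
          thus ?thesis using src[OF xS _ xv] v vn e by auto
        qed
      qed
    qed
  qed
  have R1: "\<exists>k. (s'^^k) z = s z" if "z \<in> S" for z
  proof (cases "z = u")
    case True
    have "(s'^^2) z = s z" using True s'u s'y by (simp add: numeral_2_eq_2)
    thus ?thesis by blast
  next
    case False
    have "(s'^^1) z = s z" using s'x[OF False] that yS by auto
    thus ?thesis by blast
  qed
  have Rtr: "\<exists>k. (s'^^k) a = c" if h: "\<exists>k. (s'^^k) a = b" "\<exists>k. (s'^^k) b = c" for a b c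
  proof -
    obtain k1 k2 where "(s'^^k1) a = b" "(s'^^k2) b = c" using h by blast
    hence "(s'^^(k2 + k1)) a = c" by (simp add: funpow_add)
    thus ?thesis by blast
  qed
  have R2: "\<exists>m. (s'^^m) a = (s^^k) a" if aS: "a \<in> S" for a k
  proof (induction k)
    case 0 show ?case by (rule exI[of _ 0]) simp
  next
    case (Suc k)
    have "\<exists>m. (s'^^m) ((s^^k) a) = s ((s^^k) a)" using R1 good_iter[OF g aS] by blast
    thus ?case using Rtr[OF Suc.IH] by simp
  qed
  have R3: "\<exists>k. (s'^^k) a = b" if "a \<in> S" "b \<in> S" for a b
    using sc[OF that] R2[OF that(1)] by metis
  have G6: "\<forall>a\<in>?S. \<forall>b\<in>?S. \<exists>k. (s'^^k) a = b"
  proof (intro ballI)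
    fix a b assume a: "a \<in> ?S" and b: "b \<in> ?S"
    have "(s'^^1) u = y" using s'u by simp
    hence uyk: "\<exists>k. (s'^^k) u = y" by blast
    have "(s'^^1) y = s u" using s'y by simp
    hence ywk: "\<exists>k. (s'^^k) y = s u" by blast
    show "\<exists>k. (s'^^k) a = b"
    proof (cases "a = y")
      case True
      show ?thesis
      proof (cases "b = y")
        case True have "(s'^^0) a = b" using True \<open>a = y\<close> by simp
        thus ?thesis by blast
      next
        case False thus ?thesis using b True Rtr[OF ywk R3[OF wS]] by auto
      qed
    next
      case False
      hence aS: "a \<in> S" using a by auto
      show ?thesis
      proof (cases "b = y")
        case True thus ?thesis using Rtr[OF R3[OF aS uS] uyk] by simp
      next
        case False thus ?thesis using b R3[OF aS] by auto
      qed
    qed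
  qed
  have "good A ?S s'" unfolding good_def
    by (intro conjI; (fact G1a | fact G1b | fact G2 | fact G3 | fact G4 | fact G5 | fact G6))
  thus ?thesis by blast
qed



lemma walk_exists:
  assumes "(a,b) \<in> A\<^sup>+"
  shows "\<exists>k c. 0 < k \<and> c 0 = a \<and> (\<forall>i<k. (c i, if Suc i = k then b else c (Suc i)) \<in> A)"
  using assms
proof (induction rule: trancl_induct)
  case (base y)
  show ?case by (rule exI[of _ 1], rule exI[of _ "\<lambda>_. a"]) (use base in auto)
next
  case (step y z)
  then obtain k c where kc: "0 < k" "c 0 = a" "\<forall>i<k. (c i, if Suc i = k then y else c (Suc i)) \<in> A" by blast
  define c' where "c' = c(k := y)"
  have "\<forall>i<Suc k. (c' i, if Suc i = Suc k then z else c' (Suc i)) \<in> A"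
  proof (intro allI impI)
    fix i assume i: "i < Suc k"
    show "(c' i, if Suc i = Suc k then z else c' (Suc i)) \<in> A"
    proof (cases "i = k")
      case True thus ?thesis using step(2) unfolding c'_def by simp
    next
      case False
      hence "i < k" using i by simp
      thus ?thesis using kc(3) False unfolding c'_def by (cases "Suc i = k") auto
    qed
  qed
  moreover have "c' 0 = a" using kc unfolding c'_def by simp
  ultimately show ?case by blast
qed

definition CW :: "('a \<times> 'a) set \<Rightarrow> nat \<Rightarrow> (nat \<Rightarrow> 'a) \<Rightarrow> bool" where
  "CW A k c \<longleftrightarrow> 0 < k \<and> (\<forall>i<k. (c i, c (Suc i mod k)) \<in> A)"

lemma cw_exists: "(a,a) \<in> A\<^sup>+ \<Longrightarrow> \<exists>k c. CW A k c"
proof -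
  assume aa: "(a,a) \<in> A\<^sup>+"
  obtain k c where kc: "0 < k" "c 0 = a" "\<forall>i<k. (c i, if Suc i = k then a else c (Suc i)) \<in> A"
    using walk_exists[OF aa] by (elim exE conjE) (rule that)
  have "\<forall>i<k. (c i, c (Suc i mod k)) \<in> A"
  proof (intro allI impI)
    fix i assume i: "i < k"
    have h: "(c i, if Suc i = k then a else c (Suc i)) \<in> A" using kc(3) i by blast
    show "(c i, c (Suc i mod k)) \<in> A"
    proof (cases "Suc i = k")
      case True thus ?thesis using kc(2) h by simp
    next
      case False hence "Suc i < k" using i by simp
      thus ?thesis using h False by simp
    qed
  qed
  thus ?thesis using kc(1) unfolding CW_def by blast
qed

lemma chordless:
  assumes cw: "CW A k c" and mn: "\<And>k' c'. k' < k \<Longrightarrow> \<not> CW A k' c'" and nl: "\<And>x. (x,x) \<notin> A"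
    and i: "i < k" and j: "j < k" and ij: "(c i, c j) \<in> A"
  shows "j = Suc i mod k"
proof (rule ccontr)
  assume ne: "j \<noteq> Suc i mod k"
  have arc: "\<And>m. m < k \<Longrightarrow> (c m, c (Suc m mod k)) \<in> A" using cw unfolding CW_def by blast
  have "i \<noteq> j" using ij nl by auto
  show False
  proof (cases "i < j")
    case True
    have si: "Suc i mod k = Suc i" using True j by simp
    hence lt: "Suc i < j" using ne True by simp
    define d where "d = j - Suc i"
    define k' where "k' = k - d"
    define c' where "c' = (\<lambda>m. if m \<le> i then c m else c (m + d))"
    have k'k: "k' < k" "0 < k'" "Suc i < k'" using lt j unfolding k'_def d_def by auto
    have "CW A k' c'" unfolding CW_def
    proof (intro conjI allI impI)
      show "0 < k'" by fact
      fix m assume m: "m < k'"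
      show "(c' m, c' (Suc m mod k')) \<in> A"
      proof (cases "m < i")
        case True
        hence "Suc m mod k' = Suc m" "Suc m mod k = Suc m" using k'k i by auto
        thus ?thesis using arc[of m] True i unfolding c'_def by auto
      next
        case False
        show ?thesis
        proof (cases "m = i")
          case True
          hence "Suc m mod k' = Suc i" using k'k by simp
          moreover have "Suc i + d = j" unfolding d_def using lt by simp
          ultimately show ?thesis using ij True unfolding c'_def by simp
        next
          case False
          hence mi: "i < m" using \<open>\<not> m < i\<close> by simp
          show ?thesis
          proof (cases "Suc m < k'")
            case True
            hence "Suc m mod k' = Suc m" "Suc (m + d) mod k = Suc (m + d)" using k'k unfolding k'_def by auto
            thus ?thesis using arc[of "m + d"] mi True unfolding c'_def k'_def by auto
          next
            case False
            hence "Suc m = k'" using m by simp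
            hence "Suc m mod k' = 0" "m + d = k - 1" "Suc (k - 1) mod k = 0" using k'k unfolding k'_def d_def
              using lt j by auto
            moreover have "k - 1 < k" using j by simp
            ultimately show ?thesis using arc[of "k - 1"] mi unfolding c'_def by auto
          qed
        qed
      qed
    qed
    thus False using mn k'k by blast
  next
    case False
    hence ji: "j < i" using \<open>i \<noteq> j\<close> by simp
    define k' where "k' = Suc (i - j)"
    define c' where "c' = (\<lambda>m. c (j + m))"
    have k'k: "k' < k"
    proof (rule ccontr)
      assume "\<not> k' < k"
      hence "j = 0" "Suc i = k" using i ji unfolding k'_def by auto
      thus False using ne by simp
    qed
    have "CW A k' c'" unfolding CW_def
    proof (intro conjI allI impI)
      show "0 < k'" unfolding k'_def by simp
      fix m assume m: "m < k'"
      show "(c' m, c' (Suc m mod k')) \<in> A"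
      proof (cases "Suc m < k'")
        case True
        hence "Suc m mod k' = Suc m" "Suc (j + m) mod k = Suc (j + m)" using k'k i ji unfolding k'_def by auto
        thus ?thesis using arc[of "j + m"] True i unfolding c'_def k'_def by auto
      next
        case False
        hence sm: "Suc m = k'" using m by simp
        hence "m = i - j" unfolding k'_def by simp
        moreover have "Suc m mod k' = 0" using sm by simp
        ultimately show ?thesis using ij ji unfolding c'_def by simp
      qed
    qed
    thus False using mn k'k by blast
  qed
qed

lemma suc_mod_inj: "i < k \<Longrightarrow> j < k \<Longrightarrow> Suc i mod k = Suc j mod k \<Longrightarrow> i = j"
  by (auto simp: mod_Suc split: if_splits)

lemma cw_good:
  assumes cw: "CW A k c" and mn: "\<And>k' c'. k' < k \<Longrightarrow> \<not> CW A k' c'" and nl: "\<And>x. (x,x) \<notin> A"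
  shows "\<exists>S s. good A S s \<and> S = c ` {..<k}"
proof -
  have k: "0 < k" and arc: "\<And>m. m < k \<Longrightarrow> (c m, c (Suc m mod k)) \<in> A" using cw unfolding CW_def by blast+
  have cl: "\<And>i j. i < k \<Longrightarrow> j < k \<Longrightarrow> (c i, c j) \<in> A \<Longrightarrow> j = Suc i mod k"
    using chordless[OF cw mn nl] by blast
  have dist: "i = j" if "i < k" "j < k" "c i = c j" for i j
  proof -
    have "Suc j mod k < k" using k by simp
    have "(c i, c (Suc j mod k)) \<in> A" using arc[OF that(2)] that(3) by simp
    hence "Suc j mod k = Suc i mod k" using cl[OF that(1) \<open>Suc j mod k < k\<close>] by simp
    thus ?thesis using suc_mod_inj that by metis
  qed
  define ix where "ix = (\<lambda>x. THE i. i < k \<and> c i = x)"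
  have ix: "ix (c i) = i" if "i < k" for i
    unfolding ix_def by (rule the_equality) (use that dist in auto)
  define s where "s = (\<lambda>x. c (Suc (ix x) mod k))"
  have sc: "s (c i) = c (Suc i mod k)" if "i < k" for i using ix[OF that] unfolding s_def by simp
  have it: "(s^^m) (c i) = c ((i + m) mod k)" if "i < k" for i m
  proof (induction m)
    case 0 thus ?case using that by simp
  next
    case (Suc m)
    have "(i + m) mod k < k" using k by simp
    hence "(s^^Suc m) (c i) = c (Suc ((i + m) mod k) mod k)" using Suc sc by simp
    also have "\<dots> = c ((i + Suc m) mod k)" by (simp add: mod_Suc_eq)
    finally show ?case .
  qed
  let ?S = "c ` {..<k}"
  have "good A ?S s" unfolding good_def
  proof (intro conjI ballI impI)
    show "finite ?S" by simp
    show "?S \<noteq> {}" using k by auto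
    show "s ` ?S \<subseteq> ?S" using sc k by auto
    show "inj_on s ?S"
    proof (rule inj_onI)
      fix a b assume "a \<in> ?S" "b \<in> ?S" "s a = s b"
      then obtain i j where ij: "i < k" "j < k" "a = c i" "b = c j" "c (Suc i mod k) = c (Suc j mod k)"
        using sc by auto
      have "Suc i mod k = Suc j mod k" using dist[OF _ _ ij(5)] k by simp
      thus "a = b" using suc_mod_inj ij by metis
    qed
    fix x assume "x \<in> ?S"
    then obtain i where i: "i < k" "x = c i" by auto
    show "(x, s x) \<in> A" using i sc arc by simp
    fix v assume "v \<in> ?S" "(x,v) \<in> A" "v \<noteq> s x"
    then obtain j where j: "j < k" "v = c j" by auto
    have "j = Suc i mod k" using cl i j \<open>(x,v) \<in> A\<close> by simp
    thus "(s x, v) \<in> A" using \<open>v \<noteq> s x\<close> i j sc by simp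
  next
    fix a b assume "a \<in> ?S" "b \<in> ?S"
    then obtain i j where ij: "i < k" "j < k" "a = c i" "b = c j" by auto
    have "(i + (k - i + j)) mod k = j" using ij by simp
    hence "(s^^(k - i + j)) a = b" using it ij by simp
    thus "\<exists>m. (s^^m) a = b" by blast
  qed
  thus ?thesis by blast
qed

lemma leave: "(a,b) \<in> A\<^sup>* \<Longrightarrow> a \<in> S \<Longrightarrow> b \<notin> S \<Longrightarrow> \<exists>u y. u \<in> S \<and> y \<notin> S \<and> (u,y) \<in> A"
  by (induction rule: rtrancl_induct) auto



lemma extend:
  assumes fin: "finite V" and sc: "strongly_connected V A" and AV: "A \<subseteq> V \<times> V"
    and tour: "\<And>x a b. (x,a) \<in> A \<Longrightarrow> (x,b) \<in> A \<Longrightarrow> a \<noteq> b \<Longrightarrow> (a,b) \<in> A \<or> (b,a) \<in> A"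
    and acyc: "\<And>x. acyclic (induced_arcs A (in_nbhd A x))"
    and nl: "\<And>x. (x,x) \<notin> A"
  shows "good A S s \<Longrightarrow> S \<subseteq> V \<Longrightarrow> \<exists>s. good A V s"
proof (induction "card (V - S)" arbitrary: S s rule: less_induct)
  case less
  show ?case
  proof (cases "S = V")
    case True thus ?thesis using less.prems by blast
  next
    case False
    then obtain b where b: "b \<in> V" "b \<notin> S" using less.prems(2) by blast
    have "S \<noteq> {}" using less.prems(1) unfolding good_def by simp
    then obtain a where a: "a \<in> S" by blast
    have aV: "a \<in> V" using a less.prems(2) by blast
    have "(a,b) \<in> A\<^sup>*" using sc aV b(1) unfolding strongly_connected_def by simp
    from leave[OF this a b(2)] obtain u y where uy: "u \<in> S" "y \<notin> S" "(u,y) \<in> A" by blast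
    have yV: "y \<in> V" using uy AV by blast
    have "\<exists>s'. good A (insert y S) s'"
    proof (rule insert_good[OF less.prems(1)])
      show "\<And>x a b. (x,a) \<in> A \<Longrightarrow> (x,b) \<in> A \<Longrightarrow> a \<noteq> b \<Longrightarrow> (a,b) \<in> A \<or> (b,a) \<in> A" by (rule tour)
      show "\<And>x. acyclic (induced_arcs A (in_nbhd A x))" by (rule acyc)
      show "\<And>x. (x,x) \<notin> A" by (rule nl)
      show "y \<notin> S" "u \<in> S" "(u,y) \<in> A" by (rule uy(2), rule uy(1), rule uy(3))
    qed
    then obtain s' where g': "good A (insert y S) s'" by blast
    have e: "V - insert y S = (V - S) - {y}" by blast
    have "card ((V - S) - {y}) < card (V - S)"
      by (rule card_Diff1_less) (use fin yV uy(2) in auto)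
    hence lt: "card (V - insert y S) < card (V - S)" using e by simp
    have "insert y S \<subseteq> V" using yV less.prems(2) by blast
    thus ?thesis using less.hyps[OF lt g'] by blast
  qed
qed

lemma inj_pow: "inj_on s V \<Longrightarrow> s ` V \<subseteq> V \<Longrightarrow> inj_on (s^^i) V"
proof (induction i)
  case 0 thus ?case by simp
next
  case (Suc i)
  have "inj_on (s^^i) (s ` V)" using Suc.IH Suc.prems inj_on_subset by blast
  hence "inj_on ((s^^i) \<circ> s) V" using Suc.prems(1) by (rule comp_inj_on[rotated])
  thus ?case by (simp only: funpow_Suc_right)
qed

lemma list_of_good:
  assumes fin: "finite V" and g: "good A V s" and v0: "v0 \<in> V" and AV: "A \<subseteq> V \<times> V" and nl: "\<And>x. (x,x) \<notin> A"
  shows "\<exists>vs. linear_order_of V vs \<and>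
           (\<forall>x y z. (x, y) \<in> A \<longrightarrow> z \<in> open_cyc_interval vs x y \<longrightarrow> (z, y) \<in> A)"
proof -
  have im: "s ` V \<subseteq> V" and inj: "inj_on s V"
    and scy: "\<And>a b. a \<in> V \<Longrightarrow> b \<in> V \<Longrightarrow> \<exists>k. (s^^k) a = b" using g unfolding good_def by blast+
  define n where "n = card V"
  define f where "f = (\<lambda>i. (s^^i) v0)"
  have fV: "f i \<in> V" for i unfolding f_def using good_iter[OF g v0] .
  have fadd: "(s^^i) (f j) = f (i + j)" for i j unfolding f_def by (simp add: funpow_add)
  have npos: "0 < n" using v0 fin unfolding n_def by (simp add: card_gt_0_iff; blast)
  have cancel: "f j = v0" if "f (i + j) = f i" for i j
  proof -
    have "(s^^i) (f j) = f i" using fadd[of i j] that by simp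
    also have "f i = (s^^i) v0" unfolding f_def by simp
    finally have "(s^^i) (f j) = (s^^i) v0" .
    thus ?thesis using inj_onD[OF inj_pow[OF inj im, of i] _ fV v0] by blast
  qed
  have modp: "f m = f (m mod p)" if p: "0 < p" "f p = v0" for p m
  proof (induction m rule: less_induct)
    case (less m)
    show ?case
    proof (cases "m < p")
      case True thus ?thesis by simp
    next
      case False
      have "f m = (s^^(m - p)) (f p)" using fadd[of "m - p" p] False by simp
      also have "\<dots> = f (m - p)" using p unfolding f_def by simp
      also have "\<dots> = f ((m - p) mod p)" using less p False by simp
      also have "\<dots> = f (m mod p)" using False by (simp add: le_mod_geq)
      finally show ?thesis .
    qed
  qed
  have injf: "inj_on f {..<n}"
  proof (rule inj_onI, rule ccontr)
    fix i j assume ij: "i \<in> {..<n}" "j \<in> {..<n}" "f i = f j" "i \<noteq> j"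
    have "\<exists>i j. i < j \<and> j < n \<and> f i = f j" using ij by (metis lessThan_iff nat_neq_iff)
    then obtain i j where ij: "i < j" "j < n" "f i = f j" by blast
    have pv: "f (j - i) = v0" using cancel[of i "j - i"] ij by simp
    have "V \<subseteq> f ` {..<j - i}"
    proof
      fix z assume "z \<in> V"
      then obtain m where "(s^^m) v0 = z" using scy v0 by blast
      hence "z = f (m mod (j - i))" using modp[of "j - i" m] pv ij unfolding f_def by simp
      moreover have "m mod (j - i) < j - i" using ij by simp
      ultimately show "z \<in> f ` {..<j - i}" by blast
    qed
    hence "card V \<le> card (f ` {..<j - i})" by (simp add: card_mono)
    also have "\<dots> \<le> j - i" using card_image_le[of "{..<j - i}" f] by simp
    finally show False using ij unfolding n_def by simp
  qed
  have imgf: "f ` {..<n} = V"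
  proof (rule card_subset_eq[OF fin])
    show "f ` {..<n} \<subseteq> V" using fV by blast
    show "card (f ` {..<n}) = card V" using card_image[OF injf] unfolding n_def by simp
  qed
  have fn: "f n = v0"
  proof -
    obtain i where i: "i < n" "f n = f i" using fV[of n] imgf by (metis imageE lessThan_iff)
    show ?thesis
    proof (cases "i = 0")
      case True thus ?thesis using i unfolding f_def by simp
    next
      case False
      have "f (n - i) = v0" using cancel[of i "n - i"] i by simp
      hence "f (n - i) = f 0" unfolding f_def by simp
      hence "n - i = 0" using inj_onD[OF injf] i False by (metis diff_less lessThan_iff npos zero_less_iff_neq_zero)
      thus ?thesis using i by simp
    qed
  qed
  have per: "f m = f (m mod n)" for m using modp[OF npos fn] .
  define vs where "vs = map f [0..<n]"
  have len: "length vs = n" unfolding vs_def by simp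
  have nth: "vs ! i = f i" if "i < n" for i using that unfolding vs_def by simp
  have d: "distinct vs" unfolding vs_def using injf by (simp add: distinct_map lessThan_atLeast0)
  have sv: "set vs = V" unfolding vs_def using imgf by (simp add: lessThan_atLeast0)
  have lo: "linear_order_of V vs" unfolding linear_order_of_def using d sv by simp
  have iter: "(s^^m) x = vs ! ((idx vs x + m) mod n)" if "x \<in> V" for x m
  proof -
    have ix: "idx vs x < n" "vs ! idx vs x = x" using idx_in[OF d] that sv len by auto
    have "(s^^m) x = (s^^m) (f (idx vs x))" using ix nth by simp
    also have "\<dots> = f ((idx vs x + m) mod n)" using fadd per by (simp add: add.commute)
    also have "\<dots> = vs ! ((idx vs x + m) mod n)" using nth npos by simp
    finally show ?thesis .
  qed
  have rk_iter: "rk vs x ((s^^m) x) = m" if "x \<in> V" "m < n" for x m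
  proof -
    have ix: "idx vs x < n" using idx_in[OF d] that sv len by auto
    have "(idx vs x + m) mod n < n" using npos by simp
    hence "idx vs ((s^^m) x) = (idx vs x + m) mod n" using iter[OF that(1)] idx_nth[OF d] len by simp
    moreover have "(idx vs x + m) mod n = (if idx vs x + m < n then idx vs x + m else idx vs x + m - n)"
      using ix that(2) by (simp add: le_mod_geq)
    ultimately show ?thesis unfolding rk_def using ix that(2) len by auto
  qed
  have rk_back: "(s^^(rk vs x z)) x = z" "rk vs x z < n" if "x \<in> V" "z \<in> V" for x z
  proof -
    have ix: "idx vs x < n" "idx vs z < n" "vs ! idx vs z = z" using idx_in[OF d] that sv len by auto
    show "rk vs x z < n" using ix len unfolding rk_def by auto
    have "(idx vs x + rk vs x z) mod n = idx vs z" using ix len unfolding rk_def by auto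
    thus "(s^^(rk vs x z)) x = z" using iter[OF that(1)] ix by simp
  qed
  show ?thesis
  proof (intro exI conjI allI impI)
    show "linear_order_of V vs" by (rule lo)
    fix x y z assume xy: "(x,y) \<in> A" and z: "z \<in> open_cyc_interval vs x y"
    have xV: "x \<in> V" "y \<in> V" using xy AV by auto
    have xny: "x \<noteq> y" using xy nl by auto
    have zz: "z \<in> set vs \<and> 0 < rk vs x z \<and> rk vs x z < rk vs x y"
      using oci[OF d, of x y z] xV sv xny z by auto
    have zV: "z \<in> V" using zz sv by simp
    have rn: "rk vs x z < n" using rk_back(2)[OF xV(1) zV] .
    have "((s^^(rk vs x z)) x, y) \<in> A"
    proof (rule fwd[OF g xV(1) xV(2) xy])
      show "\<forall>m'. 0 < m' \<and> m' \<le> rk vs x z \<longrightarrow> (s^^m') x \<noteq> y"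
      proof (intro allI impI)
        fix m' assume m': "0 < m' \<and> m' \<le> rk vs x z"
        show "(s^^m') x \<noteq> y"
        proof
          assume e: "(s^^m') x = y"
          have "rk vs x ((s^^m') x) = m'" using rk_iter[OF xV(1)] m' rn by simp
          thus False using e m' zz by simp
        qed
      qed
    qed
    thus "(z, y) \<in> A" using rk_back(1)[OF xV(1) zV] by simp
  qed
qed



theorem theorem2p1:
  fixes V :: "'a set" and A :: "('a \<times> 'a) set"
  assumes "oriented_graph V A" and "strongly_connected V A"
  shows "(\<forall>x\<in>V. induces_tournament A (out_nbhd A x) \<and> induces_acyclic A (in_nbhd A x))
     \<longleftrightarrow> (\<exists>vs. linear_order_of V vs \<and>
           (\<forall>x y z. (x, y) \<in> A \<longrightarrow> z \<in> open_cyc_interval vs x y \<longrightarrow> (z, y) \<in> A))"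
proof
  assume H: "\<forall>x\<in>V. induces_tournament A (out_nbhd A x) \<and> induces_acyclic A (in_nbhd A x)"
  have fin: "finite V" and AV: "A \<subseteq> V \<times> V" and nl: "\<And>x. (x,x) \<notin> A"
    using assms(1) unfolding oriented_graph_def digraph_def by auto
  have tour: "(a,b) \<in> A \<or> (b,a) \<in> A" if "(x,a) \<in> A" "(x,b) \<in> A" "a \<noteq> b" for x a b
  proof -
    have "x \<in> V" using that AV by auto
    hence "induces_tournament A (out_nbhd A x)" using H by blast
    moreover have "a \<in> out_nbhd A x" "b \<in> out_nbhd A x" using that unfolding out_nbhd_def by auto
    ultimately show ?thesis using that(3) unfolding induces_tournament_def induced_arcs_def by blast
  qed
  have acyc: "acyclic (induced_arcs A (in_nbhd A x))" for x
  proof (cases "x \<in> V")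
    case True thus ?thesis using H unfolding induces_acyclic_def by blast
  next
    case False
    hence "in_nbhd A x = {}" using AV unfolding in_nbhd_def by auto
    thus ?thesis unfolding induced_arcs_def by (simp add: acyclic_def)
  qed
  show "\<exists>vs. linear_order_of V vs \<and>
           (\<forall>x y z. (x, y) \<in> A \<longrightarrow> z \<in> open_cyc_interval vs x y \<longrightarrow> (z, y) \<in> A)"
  proof (cases "\<exists>u\<in>V. \<exists>v\<in>V. u \<noteq> v")
    case True
    then obtain u v where uv: "u \<in> V" "v \<in> V" "u \<noteq> v" by blast
    have "(u,v) \<in> A\<^sup>*" "(v,u) \<in> A\<^sup>*" using assms(2) uv unfolding strongly_connected_def by auto
    hence "(u,v) \<in> A\<^sup>+" using uv(3) by (meson rtranclD)
    hence "(u,u) \<in> A\<^sup>+" using \<open>(v,u) \<in> A\<^sup>*\<close> by (rule trancl_rtrancl_trancl)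
    hence "\<exists>k c. CW A k c" by (rule cw_exists)
    hence "\<exists>k. (\<exists>c. CW A k c) \<and> (\<forall>m<k. \<not> (\<exists>c. CW A m c))" by (rule exists_least_iff[THEN iffD1])
    then obtain k c where kc: "CW A k c" and mn: "\<And>k' c'. k' < k \<Longrightarrow> \<not> CW A k' c'" by blast
    obtain S s where gS: "good A S s" and S: "S = c ` {..<k}" using cw_good[OF kc mn nl] by blast
    have "S \<subseteq> V"
    proof
      fix z assume "z \<in> S"
      then obtain i where "i < k" "z = c i" using S by auto
      hence "(z, c (Suc i mod k)) \<in> A" using kc unfolding CW_def by blast
      thus "z \<in> V" using AV by auto
    qed
    have "\<exists>s. good A V s"
    proof (rule extend[OF fin assms(2) AV])
      show "\<And>x a b. (x,a) \<in> A \<Longrightarrow> (x,b) \<in> A \<Longrightarrow> a \<noteq> b \<Longrightarrow> (a,b) \<in> A \<or> (b,a) \<in> A" by (rule tour)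
      show "\<And>x. acyclic (induced_arcs A (in_nbhd A x))" by (rule acyc)
      show "\<And>x. (x,x) \<notin> A" by (rule nl)
      show "good A S s" by (rule gS)
      show "S \<subseteq> V" by fact
    qed
    then obtain s' where g: "good A V s'" by blast
    show ?thesis by (rule list_of_good[OF fin g uv(1) AV nl])
  next
    case False
    hence sub: "V \<subseteq> {u. u \<in> V}" and one: "\<And>u v. u \<in> V \<Longrightarrow> v \<in> V \<Longrightarrow> u = v" by auto
    have A0: "A = {}" using AV nl one by fastforce
    obtain vs where vs: "distinct vs" "set vs = V"
      using fin finite_distinct_list by blast
    show ?thesis unfolding linear_order_of_def using vs A0 by blast
  qed
next
  assume "\<exists>vs. linear_order_of V vs \<and>
           (\<forall>x y z. (x, y) \<in> A \<longrightarrow> z \<in> open_cyc_interval vs x y \<longrightarrow> (z, y) \<in> A)"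
  then obtain vs where lo: "linear_order_of V vs"
    and P: "\<forall>x y z. (x, y) \<in> A \<longrightarrow> z \<in> open_cyc_interval vs x y \<longrightarrow> (z, y) \<in> A" by blast
  show "\<forall>x\<in>V. induces_tournament A (out_nbhd A x) \<and> induces_acyclic A (in_nbhd A x)"
    using two_one[OF assms(1) lo P] by blast
qed

end
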